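(* Let $\zeta\in\mathbb{C}^\times$ have finite order $\ell\ge1$, and identify the dominant weights of $\mathfrak{sl}_2$ with the nonnegative integers. For $j\ge0$ put $s_j=j$ if $j$ is odd and $s_j=j/2$ if $j$ is even. Then the quantum Weyl module $\Delta_\zeta(\lambda)$ for $U_\zeta(\mathfrak{sl}_2)$ is irreducible if and only if either (a) $0\le\lambda<s_\ell$, or (b) $\lambda\equiv-1\pmod{s_\ell}$.
   Context: $U_\zeta(\mathfrak{sl}_2)=\mathbb{U}_q^{\mathcal{A}}(\mathfrak{sl}_2)\otimes_{\mathcal{A}}\mathbb{C}$ ($q\mapsto\zeta$) is the specialization of Lusztig's divided-power $\mathcal{A}$-form ($\mathcal{A}=\mathbb{Q}[q,q^{-1}]$) of the quantum enveloping algebra of $\mathfrak{sl}_2$. Modules are integrable of type 1. For a dominant weight $\lambda$, $\nabla_\zeta(\lambda)$ is the induced module from the Borel part with character given by Weyl's formula, and the quantum Weyl module is $\Delta_\zeta(\lambda)=\nabla_\zeta(-w_0\lambda)^*$. *)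

theory Defs
  imports "HOL-Number_Theory.Cong" Complex_Main
begin

text \<open>Gaussian (quantum) binomial coefficient [m, t] in Z[q,q^-1], specialized at q = z.
  Defined by the Pascal-type recursion [m,t] = q^t [m-1,t] + q^-(m-t) [m-1,t-1],
  [0,0] = 1, [0,t+1] = 0, which holds already in the Laurent polynomial ring,
  so this is the image of the A-valued binomial under q |-> z.\<close>
fun qbin :: "complex \<Rightarrow> nat \<Rightarrow> nat \<Rightarrow> complex" where
  "qbin z 0 t = (if t = 0 then 1 else 0)"
| "qbin z (Suc m) 0 = 1"
| "qbin z (Suc m) (Suc t) =
     z ^ Suc t * qbin z m (Suc t) + inverse z ^ (m - t) * qbin z m t"

text \<open>Underlying space of the Weyl module Delta(lam): coordinate vectors
  w.r.t. the basis v_0, ..., v_lam (v_j = F^(j) v_0).\<close>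
definition weyl_space :: "nat \<Rightarrow> (nat \<Rightarrow> complex) set" where
  "weyl_space lam = {v. \<forall>i>lam. v i = 0}"

text \<open>Action of divided powers and K on Delta(lam):
  E^(r) v_j = [lam-j+r, r] v_(j-r),  F^(r) v_j = [j+r, r] v_(j+r),  K v_j = z^(lam-2j) v_j.\<close>
definition weyl_E :: "complex \<Rightarrow> nat \<Rightarrow> nat \<Rightarrow> (nat \<Rightarrow> complex) \<Rightarrow> (nat \<Rightarrow> complex)" where
  "weyl_E z lam r v = (\<lambda>i. if i + r \<le> lam then qbin z (lam - i) r * v (i + r) else 0)"

definition weyl_F :: "complex \<Rightarrow> nat \<Rightarrow> nat \<Rightarrow> (nat \<Rightarrow> complex) \<Rightarrow> (nat \<Rightarrow> complex)" where
  "weyl_F z lam r v = (\<lambda>i. if r \<le> i \<and> i \<le> lam then qbin z i r * v (i - r) else 0)"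

definition weyl_K :: "complex \<Rightarrow> nat \<Rightarrow> int \<Rightarrow> (nat \<Rightarrow> complex) \<Rightarrow> (nat \<Rightarrow> complex)" where
  "weyl_K z lam e v = (\<lambda>i. if i \<le> lam then z powi (e * (int lam - 2 * int i)) * v i else 0)"

definition csubspace :: "(nat \<Rightarrow> complex) set \<Rightarrow> bool" where
  "csubspace W \<longleftrightarrow> (\<lambda>i. 0) \<in> W \<and> (\<forall>x\<in>W. \<forall>y\<in>W. (\<lambda>i. x i + y i) \<in> W) \<and> (\<forall>c::complex. \<forall>x\<in>W. (\<lambda>i. c * x i) \<in> W)"

text \<open>U_z(sl2)-submodule of Delta(lam): subspace stable under the generators
  E^(r), F^(r), K^(+-1) of the specialized divided-power algebra.\<close>
definition weyl_submodule :: "complex \<Rightarrow> nat \<Rightarrow> (nat \<Rightarrow> complex) set \<Rightarrow> bool" where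
  "weyl_submodule z lam W \<longleftrightarrow> csubspace W \<and> W \<subseteq> weyl_space lam \<and>
     (\<forall>r. \<forall>v\<in>W. weyl_E z lam r v \<in> W) \<and>
     (\<forall>r. \<forall>v\<in>W. weyl_F z lam r v \<in> W) \<and>
     (\<forall>e\<in>{1, -1}. \<forall>v\<in>W. weyl_K z lam e v \<in> W)"

definition weyl_irreducible :: "complex \<Rightarrow> nat \<Rightarrow> bool" where
  "weyl_irreducible z lam \<longleftrightarrow> weyl_space lam \<noteq> {\<lambda>i. 0} \<and>
     (\<forall>W. weyl_submodule z lam W \<longrightarrow> W = {\<lambda>i. 0} \<or> W = weyl_space lam)"

definition s_of :: "nat \<Rightarrow> nat" where
  "s_of j = (if odd j then j else j div 2)"

end

theory Submission
  imports Defs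
begin

fun gb :: "complex \<Rightarrow> nat \<Rightarrow> nat \<Rightarrow> complex" where
  "gb p 0 t = (if t = 0 then 1 else 0)"
| "gb p (Suc m) 0 = 1"
| "gb p (Suc m) (Suc t) = p ^ Suc t * gb p m (Suc t) + gb p m t"

lemma gb_0 [simp]: "gb p m 0 = 1"
  by (cases m) auto

lemma gb_zero: "m < t \<Longrightarrow> gb p m t = 0"
proof (induction m arbitrary: t)
  case 0 then show ?case by simp
next
  case (Suc m) then show ?case by (cases t) auto
qed

lemma gb_diag [simp]: "gb p m m = 1"
  by (induction m) (auto simp: gb_zero)

lemma gb_prod:
  "gb p m t * (\<Prod>k\<in>{1..t}. 1 - p ^ k) = (\<Prod>k<t. 1 - p ^ (m - k))"
proof (induction m arbitrary: t)
  case 0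
  then show ?case
  proof (cases t)
    case (Suc t') then show ?thesis by (simp add: lessThan_Suc_eq_insert_0)
  qed simp
next
  case (Suc m)
  show ?case
  proof (cases t)
    case 0 then show ?thesis by simp
  next
    case (Suc t')
    have D: "(\<Prod>k\<in>{1..Suc t'}. 1 - p ^ k) = (\<Prod>k\<in>{1..t'}. 1 - p ^ k) * (1 - p ^ Suc t')"
      by (simp add: prod.nat_ivl_Suc')
    have N1: "(\<Prod>k<Suc t'. 1 - p ^ (m - k)) = (\<Prod>k<t'. 1 - p ^ (m - k)) * (1 - p ^ (m - t'))"
      by simp
    have N2: "(\<Prod>k<Suc t'. 1 - p ^ (Suc m - k)) = (1 - p ^ Suc m) * (\<Prod>k<t'. 1 - p ^ (m - k))"
      unfolding prod.lessThan_Suc_shift by simp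
    have "gb p (Suc m) t * (\<Prod>k\<in>{1..t}. 1 - p ^ k)
        = p ^ Suc t' * (gb p m (Suc t') * (\<Prod>k\<in>{1..Suc t'}. 1 - p ^ k))
          + (1 - p ^ Suc t') * (gb p m t' * (\<Prod>k\<in>{1..t'}. 1 - p ^ k))"
      using Suc D by (simp add: algebra_simps)
    also have "\<dots> = p ^ Suc t' * (\<Prod>k<Suc t'. 1 - p ^ (m - k)) + (1 - p ^ Suc t') * (\<Prod>k<t'. 1 - p ^ (m - k))"
      by (simp only: Suc.IH)
    also have "\<dots> = (\<Prod>k<t'. 1 - p ^ (m - k)) * (1 - p ^ Suc t' * p ^ (m - t'))"
      unfolding N1 by (simp add: algebra_simps)
    also have "\<dots> = (\<Prod>k<Suc t'. 1 - p ^ (Suc m - k))"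
    proof (cases "t' \<le> m")
      case True
      then have "p ^ Suc t' * p ^ (m - t') = p ^ Suc m"
        by (simp add: power_add[symmetric])
      then show ?thesis unfolding N2 by simp
    next
      case False
      have "(\<Prod>k<t'. 1 - p ^ (m - k)) = 0"
        using False by (intro prod_zero) (auto intro!: bexI[of _ m])
      moreover have "(\<Prod>k<Suc t'. 1 - p ^ (Suc m - k)) = 0"
        using False by (intro prod_zero) (auto intro!: bexI[of _ "Suc m"])
      ultimately show ?thesis by (metis mult_zero_left)
    qed
    finally show ?thesis using Suc by simp
  qed
qed


lemma gb_nz:
  assumes "\<forall>k. 0 < k \<and> k < e \<longrightarrow> p ^ k \<noteq> 1" "t \<le> m" "m < e"
  shows "gb p m t \<noteq> 0"
proof
  assume "gb p m t = 0"
  then have "(\<Prod>k<t. 1 - p ^ (m - k)) = 0" using gb_prod[of p m t] by simp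
  then obtain k where "k < t" "p ^ (m - k) = 1" by auto
  then show False using assms by force
qed

lemma gb_mid:
  assumes "\<forall>k. 0 < k \<and> k < e \<longrightarrow> p ^ k \<noteq> 1" "p ^ e = 1" "0 < s" "s < e"
  shows "gb p e s = 0"
proof -
  have "(\<Prod>k<s. 1 - p ^ (e - k)) = 0"
    using assms by (intro prod_zero) (auto intro!: bexI[of _ 0])
  moreover have "(\<Prod>k\<in>{1..s}. 1 - p ^ k) \<noteq> 0"
    using assms by auto
  ultimately show ?thesis using gb_prod[of p e s] by (metis mult_eq_0_iff)
qed

lemma gb_shift:
  assumes "\<forall>k. 0 < k \<and> k < e \<longrightarrow> p ^ k \<noteq> 1" "p ^ e = 1" "0 < e"
  shows "gb p (m + e) t = gb p m t + (if e \<le> t then gb p m (t - e) else 0)"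
proof (induction m arbitrary: t)
  case 0
  show ?case
  proof (cases "t = 0 \<or> t = e")
    case True then show ?thesis using assms by auto
  next
    case False
    then show ?thesis using assms gb_mid[OF assms(1,2), of t] gb_zero[of e t] gb_zero[of 0 "t - e"]
      by (cases "t < e") auto
  qed
next
  case (Suc m)
  note IH = Suc.IH
  show ?case
  proof (cases t)
    case 0 then show ?thesis using assms by simp
  next
    case (Suc t')
    have eq: "gb p (Suc m + e) (Suc t') = p ^ Suc t' * gb p (m + e) (Suc t') + gb p (m + e) t'"
      by simp
    show ?thesis
    proof (cases "e \<le> t'")
      case True
      have "p ^ t' = p ^ (t' - e)"
        using True assms(2) by (metis le_add_diff_inverse2 mult_1_right power_add)
      moreover have "Suc t' - e = Suc (t' - e)" using True by simp
      ultimately show ?thesis unfolding Suc eq IH using True Suc by (simp add: algebra_simps)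
    next
      case False
      show ?thesis
      proof (cases "e = Suc t'")
        case True
        then show ?thesis unfolding Suc eq IH using Suc assms by simp
      next
        case False
        then show ?thesis unfolding Suc eq IH using Suc \<open>\<not> e \<le> t'\<close> by simp
      qed
    qed
  qed
qed

lemma gb_lucas:
  assumes "\<forall>k. 0 < k \<and> k < e \<longrightarrow> p ^ k \<noteq> 1" "p ^ e = 1" "0 < e" "b < e"
  shows "gb p (e * a + b) t = of_nat (a choose (t div e)) * gb p b (t mod e)"
proof (induction a arbitrary: t)
  case 0
  show ?case
  proof (cases "t < e")
    case True then show ?thesis by simp
  next
    case False
    then have "t div e \<noteq> 0" using assms(3) by (simp add: div_eq_0_iff)
    moreover have "gb p b t = 0" using False assms gb_zero by simp
    ultimately show ?thesis by simp
  qed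
next
  case (Suc a)
  have "gb p (e * Suc a + b) t = gb p (e * a + b + e) t" by (simp add: algebra_simps)
  also have "\<dots> = gb p (e * a + b) t + (if e \<le> t then gb p (e * a + b) (t - e) else 0)"
    using gb_shift[OF assms(1-3)] by blast
  also have "\<dots> = of_nat (Suc a choose (t div e)) * gb p b (t mod e)"
  proof (cases "e \<le> t")
    case True
    have d: "(t - e) div e = t div e - 1" and m: "(t - e) mod e = t mod e"
      using True assms(3) by (simp_all add: le_div_geq le_mod_geq)
    have pos: "t div e \<noteq> 0" using True assms(3) by (simp add: div_eq_0_iff)
    obtain k where k: "t div e = Suc k" using pos not0_implies_Suc by blast
    have "(Suc a choose (t div e)) = (a choose (t div e)) + (a choose (t div e - 1))"
      unfolding k by simp
    then show ?thesis using True unfolding Suc.IH d m by (simp add: algebra_simps)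
  next
    case False
    then show ?thesis unfolding Suc.IH by simp
  qed
  finally show ?case .
qed

lemma gb_zero_iff:
  assumes "\<forall>k. 0 < k \<and> k < e \<longrightarrow> p ^ k \<noteq> 1" "p ^ e = 1" "0 < e" "t \<le> m"
  shows "gb p m t = 0 \<longleftrightarrow> m mod e < t mod e"
proof -
  have "gb p m t = gb p (e * (m div e) + m mod e) t" by simp
  also have "\<dots> = of_nat (m div e choose (t div e)) * gb p (m mod e) (t mod e)"
    using gb_lucas[OF assms(1-3) mod_less_divisor[OF assms(3)]] by blast
  finally have eq: "gb p m t = of_nat (m div e choose (t div e)) * gb p (m mod e) (t mod e)" .
  have "(m div e choose (t div e)) \<noteq> 0" using div_le_mono[OF assms(4), of e] by (simp add: not_less)
  moreover have "gb p (m mod e) (t mod e) = 0 \<longleftrightarrow> m mod e < t mod e"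
    using gb_zero gb_nz[OF assms(1)] assms(3) by (meson mod_less_divisor not_le)
  ultimately show ?thesis unfolding eq by simp
qed


lemma qbin_0 [simp]: "qbin z m 0 = 1"
  by (cases m) auto

lemma qbin_zero: "m < t \<Longrightarrow> qbin z m t = 0"
proof (induction m arbitrary: t)
  case 0 then show ?case by simp
next
  case (Suc m) then show ?case by (cases t) auto
qed

lemma qbin_diag [simp]: "qbin z m m = 1"
  by (induction m) (auto simp: qbin_zero)

lemma qbin_gb:
  assumes "z \<noteq> 0"
  shows "z ^ (t * (m - t)) * qbin z m t = gb (z ^ 2) m t"
proof (induction m arbitrary: t)
  case 0 then show ?case by simp
next
  case (Suc m)
  note IH = Suc.IH
  show ?case
  proof (cases t)
    case 0 then show ?thesis by simp
  next
    case (Suc t')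
    show ?thesis
    proof (cases "t' < m")
      case True
      define d where "d = m - t' - 1"
      have md: "m - t' = Suc d" "m - Suc t' = d" using True unfolding d_def by auto
      have p1: "z ^ (Suc t' * Suc d) * z ^ Suc t' = (z ^ 2) ^ Suc t' * z ^ (Suc t' * d)"
      proof -
        have "z ^ (Suc t' * Suc d) * z ^ Suc t' = z ^ (Suc t' * Suc d + Suc t')"
          by (simp only: power_add)
        also have "Suc t' * Suc d + Suc t' = 2 * Suc t' + Suc t' * d" by simp
        also have "z ^ (2 * Suc t' + Suc t' * d) = (z ^ 2) ^ Suc t' * z ^ (Suc t' * d)"
          by (simp only: power_add power_mult)
        finally show ?thesis .
      qed
      have p2: "z ^ (Suc t' * Suc d) * inverse z ^ Suc d = z ^ (t' * Suc d)"
      proof -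
        have "z ^ (Suc t' * Suc d) = z ^ (t' * Suc d) * z ^ Suc d"
        proof -
          have "Suc t' * Suc d = t' * Suc d + Suc d" by simp
          then show ?thesis by (simp only: power_add)
        qed
        moreover have "z ^ Suc d * inverse z ^ Suc d = 1"
          by (metis assms power_mult_distrib right_inverse power_one)
        ultimately show ?thesis by (metis mult.assoc mult_1_right)
      qed
      have "z ^ (Suc t' * (Suc m - Suc t')) * qbin z (Suc m) (Suc t')
          = (z ^ (Suc t' * Suc d) * z ^ Suc t') * qbin z m (Suc t')
            + (z ^ (Suc t' * Suc d) * inverse z ^ Suc d) * qbin z m t'"
        using md by (simp add: distrib_left mult.assoc)
      also have "\<dots> = (z ^ 2) ^ Suc t' * (z ^ (Suc t' * (m - Suc t')) * qbin z m (Suc t'))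
            + z ^ (t' * (m - t')) * qbin z m t'"
        unfolding p1 p2 md by (simp only: mult.assoc)
      also have "\<dots> = gb (z ^ 2) (Suc m) (Suc t')"
        unfolding IH by simp
      finally show ?thesis unfolding Suc .
    next
      case False
      show ?thesis
      proof (cases "t' = m")
        case True
        then show ?thesis unfolding Suc using IH[of m] by (simp add: qbin_zero gb_zero)
      next
        case False
        then show ?thesis unfolding Suc using \<open>\<not> t' < m\<close> by (simp add: qbin_zero gb_zero)
      qed
    qed
  qed
qed

lemma mod_add_cases:
  fixes x y e :: nat
  assumes "0 < e"
  shows "(x + y) mod e = (if x mod e + y mod e < e then x mod e + y mod e else x mod e + y mod e - e)"
proof -
  have "(x + y) mod e = (x mod e + y mod e) mod e" by (simp add: mod_add_eq)
  moreover have "x mod e < e" "y mod e < e" using assms by auto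
  ultimately show ?thesis
  proof (cases "x mod e + y mod e < e")
    case True
    then show ?thesis using \<open>(x + y) mod e = (x mod e + y mod e) mod e\<close> by simp
  next
    case False
    then have "(x mod e + y mod e) mod e = (x mod e + y mod e - e) mod e"
      using le_mod_geq[of e "x mod e + y mod e"] False by linarith
    also have "\<dots> = x mod e + y mod e - e" using \<open>x mod e < e\<close> \<open>y mod e < e\<close> by (intro mod_less) linarith
    finally show ?thesis using False \<open>(x + y) mod e = (x mod e + y mod e) mod e\<close> by simp
  qed
qed


definition dlt :: "nat \<Rightarrow> nat \<Rightarrow> complex" where
  "dlt k = (\<lambda>i. if i = k then 1 else 0)"

lemma span_in:
  assumes "csubspace W" "\<forall>k<n. dlt k \<in> W"
  shows "(\<lambda>i. \<Sum>k<n. c k * dlt k i) \<in> W"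
  using assms(2)
proof (induction n)
  case 0 then show ?case using assms(1) unfolding csubspace_def by simp
next
  case (Suc n)
  have a: "(\<lambda>i. \<Sum>k<n. c k * dlt k i) \<in> W" using Suc by simp
  have b: "(\<lambda>i. c n * dlt n i) \<in> W" using Suc assms(1) unfolding csubspace_def by simp
  have "(\<lambda>i. (\<Sum>k<n. c k * dlt k i) + c n * dlt n i) \<in> W"
  proof -
    have add: "\<forall>x\<in>W. \<forall>y\<in>W. (\<lambda>i. x i + y i) \<in> W" using assms(1) unfolding csubspace_def by blast
    show ?thesis using add[rule_format, OF a b] by simp
  qed
  then show ?case by simp
qed

lemma space_span:
  assumes "v \<in> weyl_space lam"
  shows "v = (\<lambda>i. \<Sum>k<Suc lam. v k * dlt k i)"
proof (rule ext)
  fix i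
  have 1: "\<And>k. v k * dlt k i = (if k = i then v i else 0)"
    unfolding dlt_def by auto
  have "(\<Sum>k<Suc lam. v k * dlt k i) = (\<Sum>k<Suc lam. if k = i then v i else 0)"
    by (simp only: 1)
  also have "\<dots> = (if i \<in> {..<Suc lam} then v i else 0)"
    by (rule sum.delta) simp
  also have "\<dots> = v i" using assms unfolding weyl_space_def by (cases "i < Suc lam") auto
  finally show "v i = (\<Sum>k<Suc lam. v k * dlt k i)" by (rule sym)
qed

lemma irr_suff:
  assumes hB: "\<forall>r\<le>lam. qbin z lam r \<noteq> 0"
  shows "weyl_irreducible z lam"
  unfolding weyl_irreducible_def
proof (intro conjI allI impI)
  have "dlt 0 \<in> weyl_space lam" unfolding weyl_space_def dlt_def by simp
  moreover have "dlt 0 \<noteq> (\<lambda>i. 0)" unfolding dlt_def by (metis one_neq_zero)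
  ultimately show "weyl_space lam \<noteq> {\<lambda>i. 0}" by blast
next
  fix W assume sub: "weyl_submodule z lam W"
  then have cs: "csubspace W" and Wsp: "W \<subseteq> weyl_space lam"
    and WE: "\<forall>r. \<forall>v\<in>W. weyl_E z lam r v \<in> W" and WF: "\<forall>r. \<forall>v\<in>W. weyl_F z lam r v \<in> W"
    unfolding weyl_submodule_def by auto
  show "W = {\<lambda>i. 0} \<or> W = weyl_space lam"
  proof (cases "W = {\<lambda>i. 0}")
    case True then show ?thesis by simp
  next
    case False
    have "(\<lambda>i. 0) \<in> W" using cs unfolding csubspace_def by simp
    then obtain w where w: "w \<in> W" "w \<noteq> (\<lambda>i. 0)" using False by blast
    then have "\<exists>j. w j \<noteq> 0" by auto
    define j where "j = (LEAST j. w j \<noteq> 0)"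
    have wj: "w j \<noteq> 0" unfolding j_def by (rule LeastI_ex) fact
    have wlt: "\<And>i. i < j \<Longrightarrow> w i = 0" unfolding j_def using not_less_Least by blast
    have jle: "j \<le> lam"
    proof -
      have "w \<in> weyl_space lam" using w Wsp by blast
      then have "\<forall>i>lam. w i = 0" unfolding weyl_space_def by simp
      then show ?thesis using wj not_le by blast
    qed
    define c where "c = qbin z lam (lam - j) * w j"
    have c0: "c \<noteq> 0" unfolding c_def using hB wj by simp
    have Fw: "weyl_F z lam (lam - j) w = (\<lambda>i. c * dlt lam i)"
    proof
      fix i
      show "weyl_F z lam (lam - j) w i = c * dlt lam i"
      proof (cases "i = lam")
        case True then show ?thesis using jle unfolding weyl_F_def c_def dlt_def by simp
      next
        case False
        show ?thesis
        proof (cases "lam - j \<le> i \<and> i \<le> lam")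
          case True
          then have "i - (lam - j) < j" using False jle by arith
          then have "w (i - (lam - j)) = 0" by (rule wlt)
          then show ?thesis unfolding weyl_F_def dlt_def using True False by simp
        next
          case F2: False
          then show ?thesis unfolding weyl_F_def dlt_def using False F2 by auto
        qed
      qed
    qed
    have "(\<lambda>i. inverse c * weyl_F z lam (lam - j) w i) \<in> W"
    proof -
      have sc: "\<forall>c::complex. \<forall>x\<in>W. (\<lambda>i. c * x i) \<in> W" using cs unfolding csubspace_def by blast
      have "weyl_F z lam (lam - j) w \<in> W" using WF w by blast
      then show ?thesis using sc by blast
    qed
    moreover have "(\<lambda>i. inverse c * weyl_F z lam (lam - j) w i) = dlt lam"
      unfolding Fw using c0 by (simp add: mult.assoc[symmetric])
    ultimately have dl: "dlt lam \<in> W" by metis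
    have dk: "dlt k \<in> W" if "k \<le> lam" for k
    proof -
      have "weyl_E z lam (lam - k) (dlt lam) = dlt k"
      proof
        fix i
        show "weyl_E z lam (lam - k) (dlt lam) i = dlt k i"
        proof (cases "i = k")
          case True
          then show ?thesis unfolding weyl_E_def dlt_def using that by simp
        next
          case False
          then have "i + (lam - k) \<noteq> lam" using that by arith
          then show ?thesis unfolding weyl_E_def dlt_def using False by simp
        qed
      qed
      then show ?thesis using WE dl by metis
    qed
    have "weyl_space lam \<subseteq> W"
    proof
      fix v assume "v \<in> weyl_space lam"
      then have eq: "v = (\<lambda>i. \<Sum>k<Suc lam. v k * dlt k i)" by (rule space_span)
      have mem: "(\<lambda>i. \<Sum>k<Suc lam. v k * dlt k i) \<in> W"
        by (rule span_in[OF cs]) (auto intro: dk)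
      show "v \<in> W" by (subst eq) (rule mem)
    qed
    then show ?thesis using Wsp by blast
  qed
qed


lemma arithE:
  fixes e i r lam :: nat
  assumes "0 < e" "i mod e \<le> lam mod e" "i \<le> lam" "lam mod e < (i + r) mod e"
  shows "(lam - i) mod e < r mod e"
proof -
  have r0: "r mod e < e" "i mod e < e" "(lam - i) mod e < e" using assms(1) by auto
  have A: "(i + r) mod e = (if i mod e + r mod e < e then i mod e + r mod e else i mod e + r mod e - e)"
    by (rule mod_add_cases[OF assms(1)])
  have B: "((lam - i) + i) mod e = (if (lam - i) mod e + i mod e < e then (lam - i) mod e + i mod e
      else (lam - i) mod e + i mod e - e)"
    by (rule mod_add_cases[OF assms(1)])
  have li: "(lam - i) + i = lam" using assms(3) by simp
  have A': "(i + r) mod e = i mod e + r mod e"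
  proof (rule ccontr)
    assume "(i + r) mod e \<noteq> i mod e + r mod e"
    then have "(i + r) mod e = i mod e + r mod e - e" "\<not> i mod e + r mod e < e" using A by (auto split: if_splits)
    then show False using assms(2,4) r0 by linarith
  qed
  have B': "lam mod e = (lam - i) mod e + i mod e"
  proof (rule ccontr)
    assume "lam mod e \<noteq> (lam - i) mod e + i mod e"
    then have "lam mod e = (lam - i) mod e + i mod e - e" "\<not> (lam - i) mod e + i mod e < e"
      using B unfolding li by (auto split: if_splits)
    then show False using assms(2) r0 by linarith
  qed
  show ?thesis using A' B' assms(4) by linarith
qed

lemma arithF:
  fixes e i r L :: nat
  assumes "0 < e" "r \<le> i" "i mod e \<le> L" "L < (i - r) mod e"
  shows "i mod e < r mod e"
proof -
  have r0: "r mod e < e" "(i - r) mod e < e" using assms(1) by auto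
  have A: "((i - r) + r) mod e = (if (i - r) mod e + r mod e < e then (i - r) mod e + r mod e
      else (i - r) mod e + r mod e - e)"
    by (rule mod_add_cases[OF assms(1)])
  have ir: "(i - r) + r = i" using assms(2) by simp
  have A': "i mod e = (i - r) mod e + r mod e - e" "\<not> (i - r) mod e + r mod e < e"
  proof -
    show "\<not> (i - r) mod e + r mod e < e"
    proof
      assume h: "(i - r) mod e + r mod e < e"
      then have "i mod e = (i - r) mod e + r mod e" using A unfolding ir by simp
      then show False using assms(3,4) by linarith
    qed
    then show "i mod e = (i - r) mod e + r mod e - e" using A unfolding ir by simp
  qed
  show ?thesis using A' r0 by linarith
qed

lemma not_irr:
  assumes e0: "0 < e"
    and hZ: "\<forall>m t. t \<le> m \<longrightarrow> (qbin z m t = 0 \<longleftrightarrow> m mod e < t mod e)"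
    and le: "e \<le> lam" and lt: "Suc (lam mod e) < e"
  shows "\<not> weyl_irreducible z lam"
proof
  assume irr: "weyl_irreducible z lam"
  define L where "L = lam mod e"
  define W where "W = {v. v \<in> weyl_space lam \<and> (\<forall>i. i mod e \<le> L \<longrightarrow> v i = 0)}"
  have cs: "csubspace W" unfolding csubspace_def W_def weyl_space_def by auto
  have Esub: "weyl_E z lam r v \<in> W" if v: "v \<in> W" for r v
  proof -
    have vsp: "\<And>i. lam < i \<Longrightarrow> v i = 0" and vz: "\<And>i. i mod e \<le> L \<Longrightarrow> v i = 0"
      using v unfolding W_def weyl_space_def by auto
    have "weyl_E z lam r v i = 0" if "i mod e \<le> L" for i
    proof (cases "i + r \<le> lam \<and> v (i + r) \<noteq> 0")
      case True
      then have "\<not> (i + r) mod e \<le> L" using vz by blast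
      then have "(lam - i) mod e < r mod e"
        using arithE[OF e0, of i lam r] that True unfolding L_def by simp
      moreover have "r \<le> lam - i" using True by arith
      ultimately have "qbin z (lam - i) r = 0" using hZ by blast
      then show ?thesis unfolding weyl_E_def by simp
    next
      case False
      then show ?thesis unfolding weyl_E_def by auto
    qed
    moreover have "weyl_E z lam r v i = 0" if "lam < i" for i
      using that unfolding weyl_E_def by simp
    ultimately show ?thesis unfolding W_def weyl_space_def by auto
  qed
  have Fsub: "weyl_F z lam r v \<in> W" if v: "v \<in> W" for r v
  proof -
    have vz: "\<And>i. i mod e \<le> L \<Longrightarrow> v i = 0"
      using v unfolding W_def weyl_space_def by auto
    have "weyl_F z lam r v i = 0" if "i mod e \<le> L" for i
    proof (cases "r \<le> i \<and> i \<le> lam \<and> v (i - r) \<noteq> 0")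
      case True
      then have "\<not> (i - r) mod e \<le> L" using vz by blast
      then have "i mod e < r mod e"
        using arithF[OF e0, of r i L] that True by simp
      moreover have "r \<le> i" using True by blast
      ultimately have "qbin z i r = 0" using hZ by blast
      then show ?thesis unfolding weyl_F_def by simp
    next
      case False
      then show ?thesis unfolding weyl_F_def by auto
    qed
    moreover have "weyl_F z lam r v i = 0" if "lam < i" for i
      using that unfolding weyl_F_def by simp
    ultimately show ?thesis unfolding W_def weyl_space_def by auto
  qed
  have Ksub: "weyl_K z lam k v \<in> W" if v: "v \<in> W" for k v
    using v unfolding W_def weyl_space_def weyl_K_def by auto
  have sub: "weyl_submodule z lam W"
    unfolding weyl_submodule_def using cs Esub Fsub Ksub by (auto simp: W_def)
  have d1: "dlt (e - 1) \<in> W"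
  proof -
    have "(e - 1) mod e = e - 1" using e0 by simp
    then have "\<not> (e - 1) mod e \<le> L" using lt unfolding L_def by simp
    then show ?thesis unfolding W_def weyl_space_def dlt_def using le by auto
  qed
  have d1nz: "dlt (e - 1) \<noteq> (\<lambda>i. 0)"
    unfolding dlt_def by (metis one_neq_zero)
  have d0: "dlt 0 \<in> weyl_space lam" "dlt 0 \<notin> W"
    unfolding W_def weyl_space_def dlt_def by auto
  have "W = {\<lambda>i. 0} \<or> W = weyl_space lam"
    using irr sub unfolding weyl_irreducible_def by blast
  then show False using d1 d1nz d0 by blast
qed

lemma cong_lam:
  assumes "0 < e"
  shows "[int lam = -1] (mod int e) \<longleftrightarrow> Suc (lam mod e) = e"
proof -
  have "[int lam = -1] (mod int e) \<longleftrightarrow> int e dvd int (Suc lam)"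
    by (simp add: cong_iff_dvd_diff ac_simps)
  also have "\<dots> \<longleftrightarrow> e dvd Suc lam" by (rule int_dvd_int_iff)
  also have "\<dots> \<longleftrightarrow> Suc lam mod e = 0" by (rule dvd_eq_mod_eq_0)
  also have "\<dots> \<longleftrightarrow> Suc (lam mod e) = e" by (simp add: mod_Suc)
  finally show ?thesis .
qed


theorem proposition3p1:
  fixes z :: complex and l lam :: nat
  assumes "l \<ge> 1" and "z ^ l = 1" and "\<forall>k. 0 < k \<and> k < l \<longrightarrow> z ^ k \<noteq> 1"
  shows "weyl_irreducible z lam \<longleftrightarrow>
           (lam < s_of l \<or> [int lam = -1] (mod int (s_of l)))"
proof -
  have z0: "z \<noteq> 0"
  proof
    assume "z = 0"
    then have "z ^ l = 0" using assms(1) by simp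
    then show False using assms(2) by simp
  qed
  define e where "e = s_of l"
  define p where "p = z ^ 2"
  have dvdl: "l dvd n" if "z ^ n = 1" for n
  proof -
    have "z ^ n = z ^ (l * (n div l) + n mod l)" by (simp only: mult_div_mod_eq)
    also have "\<dots> = (z ^ l) ^ (n div l) * z ^ (n mod l)" by (simp only: power_add power_mult)
    finally have "z ^ n = (z ^ l) ^ (n div l) * z ^ (n mod l)" .
    then have "z ^ (n mod l) = 1" using that assms(2) by simp
    moreover have "n mod l < l" using assms(1) by simp
    ultimately have "n mod l = 0" using assms(3) by (meson neq0_conv)
    then show ?thesis by (simp add: dvd_eq_mod_eq_0)
  qed
  have e0: "0 < e"
  proof (cases "odd l")
    case True then show ?thesis unfolding e_def s_of_def using assms(1) by simp
  next
    case False
    then have "l \<noteq> 1" by auto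
    then have "2 \<le> l" using assms(1) by simp
    then show ?thesis unfolding e_def s_of_def using False by simp
  qed
  have pe: "p ^ e = 1"
  proof (cases "odd l")
    case True
    have "(z ^ 2) ^ l = (z ^ l) ^ 2" by (metis power_mult mult.commute)
    then have "p ^ e = (z ^ l) ^ 2" unfolding e_def s_of_def p_def using True by simp
    then show ?thesis using assms(2) by simp
  next
    case False
    then have "2 * (l div 2) = l" by simp
    then have "(z ^ 2) ^ (l div 2) = z ^ l" by (metis power_mult)
    then have "p ^ e = z ^ l" unfolding e_def s_of_def p_def using False by simp
    then show ?thesis using assms(2) by simp
  qed
  have pk: "\<forall>k. 0 < k \<and> k < e \<longrightarrow> p ^ k \<noteq> 1"
  proof (intro allI impI notI)
    fix k assume k: "0 < k \<and> k < e" and pk1: "p ^ k = 1"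
    have z2k: "z ^ (2 * k) = 1" using pk1 unfolding p_def by (simp add: power_mult)
    show False
    proof (cases "odd l")
      case True
      have "l dvd 2 * k" using dvdl z2k by blast
      moreover have "coprime l 2" using True by simp
      ultimately have "l dvd k" using coprime_dvd_mult_right_iff by blast
      moreover have "k < l" using k True unfolding e_def s_of_def by simp
      ultimately show False using k by (simp add: nat_dvd_not_less)
    next
      case False
      have "2 * k < l" using k False unfolding e_def s_of_def by auto
      then show False using assms(3) z2k k by simp
    qed
  qed
  have hZ: "\<forall>m t. t \<le> m \<longrightarrow> (qbin z m t = 0 \<longleftrightarrow> m mod e < t mod e)"
  proof (intro allI impI)
    fix m t :: nat assume tm: "t \<le> m"
    have "z ^ (t * (m - t)) * qbin z m t = gb p m t" using qbin_gb[OF z0] unfolding p_def by blast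
    moreover have "z ^ (t * (m - t)) \<noteq> 0" using z0 by simp
    ultimately have "qbin z m t = 0 \<longleftrightarrow> gb p m t = 0" by (metis mult_eq_0_iff)
    also have "\<dots> \<longleftrightarrow> m mod e < t mod e" by (rule gb_zero_iff[OF pk pe e0 tm])
    finally show "qbin z m t = 0 \<longleftrightarrow> m mod e < t mod e" .
  qed
  show ?thesis
    unfolding e_def[symmetric]
  proof
    assume irr: "weyl_irreducible z lam"
    show "lam < e \<or> [int lam = -1] (mod int e)"
    proof (rule ccontr)
      assume "\<not> (lam < e \<or> [int lam = -1] (mod int e))"
      then have h1: "e \<le> lam" and h2: "Suc (lam mod e) \<noteq> e" using cong_lam[OF e0] by auto
      have "lam mod e < e" using e0 by simp
      then have "Suc (lam mod e) < e" using h2 by linarith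
      then show False using not_irr[OF e0 hZ h1] irr by blast
    qed
  next
    assume c: "lam < e \<or> [int lam = -1] (mod int e)"
    have "\<forall>r\<le>lam. qbin z lam r \<noteq> 0"
    proof (intro allI impI)
      fix r assume r: "r \<le> lam"
      have "\<not> lam mod e < r mod e"
      proof (cases "lam < e")
        case True
        then show ?thesis using r by (simp add: le_trans[OF mod_le_divisor] )
      next
        case False
        then have "Suc (lam mod e) = e" using c cong_lam[OF e0] by auto
        moreover have "r mod e < e" using e0 by simp
        ultimately show ?thesis by linarith
      qed
      then show "qbin z lam r \<noteq> 0" using hZ r by blast
    qed
    then show "weyl_irreducible z lam" by (rule irr_suff)
  qed
qed

end
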